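(* Let $q$ be a power of $2$ and $k\ge1$ an integer. Let $L\in\mathbb{F}_{q^{3k}}[x]$ be a $2$-linearized polynomial (i.e. $L=\sum_i c_i x^{2^i}$ with $c_i\in\mathbb{F}_{q^{3k}}$) such that (i) $L$ permutes $\mathbb{F}_{q^k}$ (in particular maps $\mathbb{F}_{q^k}$ bijectively onto itself), and (ii) $L+L^{q^{2k}}\equiv S_{2k}^2+S_{2k}^{2q^{k+1}}\pmod{x^{q^{3k}}-x}$. Then $L+S_{2k}^{q^k+1}$ is a permutation polynomial of $\mathbb{F}_{q^{3k}}$.
   Context: $\mathbb{F}_Q$ is the finite field with $Q$ elements. For a power $q$ of $2$ and positive integer $m$, $S_m=x+x^q+\cdots+x^{q^{m-1}}\in\mathbb{F}_2[x]$; exponents on $S_m$ and $L$ denote powers of polynomials (so $L^{q^{2k}}$ is the $q^{2k}$-th power of $L$). A polynomial $f$ is a permutation polynomial of $\mathbb{F}_Q$ if $c\mapsto f(c)$ is a bijection of $\mathbb{F}_Q$. *)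

theory Defs
  imports "HOL-Computational_Algebra.Polynomial"
begin

definition S_poly :: "nat \<Rightarrow> nat \<Rightarrow> 'a::comm_ring_1 poly" where
  "S_poly q m = (\<Sum>i<m. monom 1 (q ^ i))"

definition linearized2 :: "'a::comm_ring_1 poly \<Rightarrow> bool" where
  "linearized2 L \<longleftrightarrow> (\<forall>n. coeff L n \<noteq> 0 \<longrightarrow> (\<exists>i. n = 2 ^ i))"

text \<open>The subfield F_{q^k} of a finite field, as the fixed points of x -> x^(q^k).\<close>
definition subfield_pow :: "nat \<Rightarrow> 'a::field set" where
  "subfield_pow r = {x. x ^ r = x}"

definition perm_poly :: "'a::{field,finite} poly \<Rightarrow> bool" where
  "perm_poly f \<longleftrightarrow> bij (poly f)"

end

theory Submission imports Defs "HOL-Number_Theory.Residues" begin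

hide_const (open) up_ring.monom up_ring.coeff

lemma char2_of_card:
  assumes "card (UNIV :: 'a::{field,finite} set) = 2 ^ m"
  shows "CHAR('a) = 2"
proof -
  have p: "prime CHAR('a)"
    by (intro prime_CHAR_semidom finite_imp_CHAR_pos) simp
  have "CHAR('a) dvd 2 ^ m" using CHAR_dvd_CARD[where 'a='a] assms by simp
  hence "CHAR('a) dvd 2" using p prime_dvd_power_nat by blast
  hence "CHAR('a) = 1 \<or> CHAR('a) = 2" using two_is_prime_nat[unfolded prime_nat_iff] by blast
  thus ?thesis using p by auto
qed

lemma two_zero: "CHAR('a::comm_ring_1) = 2 \<Longrightarrow> (2::'a) = 0"
  by (metis of_nat_CHAR of_nat_numeral)

lemma add_self: "(2::'a::comm_ring_1) = 0 \<Longrightarrow> x + x = (0::'a)"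
  by (metis mult_2 mult_zero_left)

lemma frob2:
  fixes x y :: "'a::comm_ring_1"
  assumes "CHAR('a) = 2"
  shows "(x+y)^(2^m) = x^(2^m)+y^(2^m)"
  by (rule freshmans_dream') (auto simp: assms)

lemma frob2_sum:
  fixes f :: "'b \<Rightarrow> 'a::comm_ring_1"
  assumes "CHAR('a) = 2"
  shows "(sum f A)^(2^m) = sum (\<lambda>i. f i^(2^m)) A"
  by (rule freshmans_dream_sum') (auto simp: assms)

lemma fermat_ff:
  fixes x :: "'a :: {field,finite}"
  shows   "x ^ card (UNIV :: 'a set) = x"
proof (cases "x = 0")
  case False
  have "x * (\<Prod>y\<in>UNIV-{0}. x * y) = x * x ^ (card (UNIV :: 'a set) - 1) * \<Prod>(UNIV-{0})"
    by (simp add: prod.distrib mult_ac)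
  also have "x * x ^ (card (UNIV :: 'a set) - 1) = x ^ Suc (card (UNIV :: 'a set) - 1)"
    by (subst power_Suc) auto
  also have "Suc (card (UNIV :: 'a set) - 1) = card (UNIV :: 'a set)"
    using finite_UNIV_card_ge_0[where ?'a = 'a] by simp
  also have "(\<Prod>y\<in>UNIV-{0}. x * y) = (\<Prod>y\<in>UNIV-{0}. y)"
    by (rule prod.reindex_bij_witness[of _ "\<lambda>y. y / x" "\<lambda>y. x * y"]) (use False in auto)
  finally show ?thesis
    by simp
qed (use finite_UNIV_card_ge_0[where ?'a = 'a] in auto)

lemma lin_add:
  fixes L :: "'a::comm_ring_1 poly"
  assumes "CHAR('a) = 2" "linearized2 L"
  shows "poly L (x + y) = poly L x + poly L y"
proof -
  have "coeff L i * (x+y)^i = coeff L i * x^i + coeff L i * y^i" for i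
  proof (cases "coeff L i = 0")
    case False
    then obtain j where "i = 2^j" using assms(2) unfolding linearized2_def by blast
    thus ?thesis using frob2[OF assms(1)] by (simp add: distrib_left)
  qed simp
  thus ?thesis by (simp add: poly_altdef sum.distrib)
qed

lemma lin_zero:
  fixes L :: "'a::comm_ring_1 poly"
  assumes "linearized2 L"
  shows "poly L 0 = 0"
proof -
  have "coeff L 0 = 0"
  proof (rule ccontr)
    assume "coeff L 0 \<noteq> 0"
    then obtain j where "(0::nat) = 2^j" using assms unfolding linearized2_def by blast
    thus False by simp
  qed
  thus ?thesis by (simp add: poly_0_coeff_0)
qed

lemma poly_mod_eval:
  fixes p m :: "'a::field poly"
  assumes "poly m x = 0"
  shows "poly (p mod m) x = poly p x"
proof -
  have "poly p x = poly (p div m * m + p mod m) x" by simp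
  also have "\<dots> = poly (p div m) x * poly m x + poly (p mod m) x" by (simp only: poly_add poly_mult)
  finally show ?thesis using assms by simp
qed

lemma sum_split_nat: "(\<Sum>i<a+b. g i) = (\<Sum>i<a. g i) + (\<Sum>i<b. g (a+i::nat))"
  by (induction b) (auto simp: add_ac)

lemma c2: "(2::'a::comm_ring_1) = 0 \<Longrightarrow> a - b = 2 * (w::'a) \<Longrightarrow> a = b" by simp

lemma h1: "(2::'a::comm_ring_1) = 0 \<Longrightarrow> a + b + (b + c) = a + (c::'a)"
proof -
  assume t: "(2::'a) = 0"
  have "a + b + (b + c) = a + c + (b + b)" by (simp only: ac_simps)
  thus ?thesis by (simp add: add_self[OF t])
qed
lemma h2: "(2::'a::comm_ring_1) = 0 \<Longrightarrow> x + y + z = 0 \<Longrightarrow> z = x + (y::'a)"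
proof -
  assume t: "(2::'a) = 0" and e: "x + y + z = 0"
  have "z + ((x + y) + (x + y)) = (x + y + z) + (x + y)" by (simp only: ac_simps)
  thus ?thesis by (simp add: e add_self[OF t])
qed
lemma h4: "(2::'a::comm_ring_1) = 0 \<Longrightarrow> x + t = s + f \<Longrightarrow> t = s + x + (f::'a)"
proof -
  assume t: "(2::'a) = 0" and e: "x + t = s + f"
  have "t + (x + x) = (x + t) + x" by (simp only: ac_simps)
  hence "t = s + f + x" by (simp add: e add_self[OF t])
  thus ?thesis by (simp only: ac_simps)
qed

theorem theorem4p1:
  fixes L :: "'a::{field,finite} poly" and q k e :: nat
  assumes q_pow2: "q = 2 ^ e"
    and k_pos: "k \<ge> 1"
    and card: "card (UNIV :: 'a set) = q ^ (3 * k)"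
    and lin: "linearized2 L"
    and perm_sub: "bij_betw (poly L) (subfield_pow (q ^ k)) (subfield_pow (q ^ k))"
    and cong: "(L + L ^ (q ^ (2 * k))) mod (monom 1 (q ^ (3 * k)) - [:0, 1:])
             = (S_poly q (2 * k) ^ 2 + S_poly q (2 * k) ^ (2 * q ^ (k + 1)))
                 mod (monom 1 (q ^ (3 * k)) - [:0, 1:])"
  shows "perm_poly (L + S_poly q (2 * k) ^ (q ^ k + 1))"
proof -
  have card2: "card (UNIV :: 'a set) = 2 ^ (e * (3 * k))"
    using card q_pow2 by (simp add: power_mult)
  have ch: "CHAR('a) = 2" by (rule char2_of_card[OF card2])
  have two: "(2::'a) = 0" by (rule two_zero[OF ch])
  have qpos: "q > 0" using q_pow2 by simp
  define fr :: "nat \<Rightarrow> 'a \<Rightarrow> 'a" where "fr = (\<lambda>j x. x ^ (q ^ j))"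
  have fr_add: "fr j (x + y) = fr j x + fr j y" for j x y
    using frob2[OF ch, of x y "e * j"] by (simp add: fr_def q_pow2 power_mult)
  have fr_sum: "fr j (sum f A) = (\<Sum>i\<in>A. fr j (f i))" for j and f :: "nat \<Rightarrow> 'a" and A
    using frob2_sum[OF ch, of f A "e * j"] by (simp add: fr_def q_pow2 power_mult)
  have fr_mult: "fr j (x * y) = fr j x * fr j y" for j x y
    by (simp add: fr_def power_mult_distrib)
  have fr_comp: "fr a (fr b x) = fr (a + b) x" for a b x
    by (simp add: fr_def power_add power_mult[symmetric] mult.commute)
  have fr_3k: "fr (3 * k) x = x" for x
    using fermat_ff[of x] card by (simp add: fr_def)
  have fr_0: "fr 0 x = x" for x by (simp add: fr_def)
  have fr_1: "fr 1 x = x ^ q" for x by (simp add: fr_def)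
  have fr_zero: "fr j x = 0 \<longleftrightarrow> x = 0" for j x
    using qpos by (simp add: fr_def)
  define Sf where "Sf = (\<lambda>x. \<Sum>i<2 * k. fr i x)"
  define T where "T = (\<lambda>x. \<Sum>i<k. fr i x)"
  have polyS: "poly (S_poly q (2 * k)) x = Sf x" for x
    by (simp add: S_poly_def poly_sum poly_monom Sf_def fr_def)
  have Sf_T: "Sf x = T x + fr k (T x)" for x
  proof -
    have "Sf x = (\<Sum>i<k + k. fr i x)" by (simp add: Sf_def mult_2)
    also have "\<dots> = T x + (\<Sum>i<k. fr (k + i) x)" by (simp add: sum_split_nat T_def)
    also have "(\<Sum>i<k. fr (k + i) x) = fr k (T x)" by (simp add: T_def fr_sum fr_comp)
    finally show ?thesis .
  qed
  have Sf_add: "Sf (x + y) = Sf x + Sf y" for x y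
    by (simp add: Sf_def fr_add sum.distrib)
  have Sf_tr: "Sf x = fr k (Sf x) + fr (2 * k) (Sf x)" for x
  proof -
    have a: "fr k (Sf x) = fr k (T x) + fr (2*k) (T x)"
      unfolding Sf_T fr_add fr_comp by (simp add: mult_2)
    have b: "fr (2*k) (Sf x) = fr (2*k) (T x) + T x"
    proof -
      have "fr (2*k) (Sf x) = fr (2*k) (T x) + fr (2*k+k) (T x)"
        unfolding Sf_T fr_add fr_comp by simp
      also have "2*k+k = 3*k" by simp
      finally show ?thesis using fr_3k by simp
    qed
    have "fr k (Sf x) + fr (2 * k) (Sf x)
        = (fr k (T x) + fr (2*k) (T x)) + (fr (2*k) (T x) + T x)"
      unfolding a b ..
    also have "\<dots> = fr k (T x) + T x"
      by (rule h1[OF two])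
    finally show ?thesis by (simp add: Sf_T add.commute)
  qed
  have Sf_q: "Sf x ^ q = Sf x + x + fr (2 * k) x" for x
  proof -
    have "Sf x ^ q = (\<Sum>i<2 * k. fr (Suc i) x)"
      unfolding fr_1[symmetric] Sf_def fr_sum fr_comp by simp
    moreover have "(\<Sum>i<Suc (2 * k). fr i x) = fr 0 x + (\<Sum>i<2 * k. fr (Suc i) x)"
      by (rule sum.lessThan_Suc_shift)
    moreover have "(\<Sum>i<Suc (2 * k). fr i x) = Sf x + fr (2 * k) x"
      by (simp add: Sf_def)
    ultimately have "x + Sf x ^ q = Sf x + fr (2 * k) x" using fr_0 by simp
    thus ?thesis by (rule h4[OF two])
  qed
  have mod0: "poly (monom 1 (q ^ (3 * k)) - [:0, 1:]) x = 0" for x :: 'a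
    using fr_3k[of x] by (simp add: poly_monom fr_def)
  have condx: "poly L x + fr (2*k) (poly L x) = Sf x ^ 2 + Sf x ^ (2 * q ^ (k + 1))" for x
  proof -
    have "poly ((L + L ^ (q ^ (2 * k))) mod (monom 1 (q ^ (3 * k)) - [:0, 1:])) x
      = poly ((S_poly q (2 * k) ^ 2 + S_poly q (2 * k) ^ (2 * q ^ (k + 1)))
                 mod (monom 1 (q ^ (3 * k)) - [:0, 1:])) x" using cong by simp
    thus ?thesis unfolding poly_mod_eval[OF mod0] by (simp add: polyS fr_def)
  qed
  define F where "F = (\<lambda>x. poly L x + Sf x ^ (q ^ k + 1))"
  have polyF: "poly (L + S_poly q (2 * k) ^ (q ^ k + 1)) x = F x" for x
    by (simp add: F_def polyS)
  have pw: "y ^ (q ^ k + 1) = fr k y * y" for y :: 'a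
    by (simp add: fr_def)
  have key: "F x + fr (2*k) (F x) = (x + fr k x + fr k (Sf x))^2" for x
  proof -
    define u where "u = Sf x"
    define v where "v = fr k u + fr k x + x"
    have k3: "2*k+k = 3*k" by simp
    have A: "fr (2*k) (F x) = fr (2*k) (poly L x) + u * fr (2*k) u"
      unfolding F_def fr_add pw fr_mult fr_comp k3 fr_3k u_def ..
    have B: "u ^ (2 * q ^ (k + 1)) = v ^ 2"
    proof -
      have "u ^ (2 * q ^ (k + 1)) = (fr k (u ^ q)) ^ 2"
        by (simp add: fr_def power_mult[symmetric] mult.commute mult.left_commute)
      also have "fr k (u ^ q) = fr k u + fr k x + fr (k + 2*k) x"
        unfolding u_def Sf_q fr_add fr_comp ..
      also have "k + 2*k = 3*k" by simp
      also have "fr k u + fr k x + fr (3*k) x = v" by (simp add: v_def fr_3k)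
      finally show ?thesis .
    qed
    have C: "fr k u * u + u * fr (2*k) u = u * u"
    proof -
      have e: "u = fr k u + fr (2*k) u" using Sf_tr[of x] unfolding u_def[symmetric] .
      have "fr k u * u + u * fr (2*k) u = u * (fr k u + fr (2*k) u)" by (simp add: algebra_simps)
      also have "\<dots> = u * u" using e by metis
      finally show ?thesis .
    qed
    have "F x + fr (2*k) (F x) = (poly L x + fr (2*k) (poly L x)) + (fr k u * u + u * fr (2*k) u)"
      unfolding A by (simp add: F_def pw u_def ac_simps fr_def)
    also have "\<dots> = (u * u + v ^ 2) + u * u"
      unfolding C condx B u_def[symmetric] by (simp add: power2_eq_square)
    also have "\<dots> = v ^ 2" using h1[OF two, of 0 "u*u" "v^2"] by (simp add: ac_simps)
    also have "v = x + fr k x + fr k (Sf x)" by (simp add: v_def u_def ac_simps)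
    finally show ?thesis .
  qed
  define M where "M = (\<lambda>w. w + fr k w + fr k (Sf w))"
  have M_add: "M (x + y) = M x + M y" for x y
    by (simp add: M_def fr_add Sf_add ac_simps)
  have sq_add: "(a + b)^2 = a^2 + b^2" for a b :: 'a
    using frob2[OF ch, of a b 1] by simp
  have Ladd: "poly L (x + y) = poly L x + poly L y" for x y
    by (rule lin_add[OF ch lin])
  have inj: "inj F"
  proof (rule injI)
    fix x y assume eq: "F x = F y"
    define z where "z = x + y"
    have yz: "y = x + z" using add_self[OF two, of x] by (simp add: z_def add.assoc[symmetric])
    have "(M x)^2 = (M y)^2" using key[of x] key[of y] eq by (simp add: M_def)
    hence "(M x + M y)^2 = 0" by (simp add: sq_add add_self[OF two])
    hence "M z = 0" by (simp add: z_def M_add)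
    hence m0: "z + fr k z + fr k (Sf z) = 0" by (simp add: M_def)
    hence m1: "fr k (Sf z) = z + fr k z" by (rule h2[OF two])
    have "fr (2*k) (fr k (Sf z)) = fr (2*k) z + fr (2*k) (fr k z)" using m1 by (simp add: fr_add)
    also have "2*k+k = 3*k" by simp
    ultimately have "Sf z = fr (2*k) z + z" by (simp add: fr_comp fr_3k)
    hence "Sf z ^ q = 0"
      using Sf_q[of z] add_self[OF two, of "Sf z"] by (simp add: ac_simps)
    hence b0: "Sf z = 0" using qpos by simp
    hence "fr k z = z" using m0 h2[OF two, of z "fr k z" 0] h2[OF two, of 0 z "fr k z"] 
      using fr_zero[of k 0] by simp
    hence zsub: "z \<in> subfield_pow (q ^ k)" by (simp add: subfield_pow_def fr_def)
    have zero_sub: "0 \<in> subfield_pow (q ^ k)" using qpos by (simp add: subfield_pow_def)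
    have "Sf y = Sf x" using yz b0 Sf_add by simp
    hence "poly L x = poly L y" using eq by (simp add: F_def)
    hence "poly L z = poly L 0" using add_self[OF two] by (simp add: z_def Ladd lin_zero[OF lin])
    hence "z = 0" using bij_betw_imp_inj_on[OF perm_sub] zsub zero_sub by (meson inj_onD)
    thus "x = y" using yz by simp
  qed
  have "bij F" using inj finite_UNIV_inj_surj[of F] by (simp add: bij_def)
  moreover have "poly (L + S_poly q (2 * k) ^ (q ^ k + 1)) = F" using polyF by auto
  ultimately show ?thesis by (simp add: perm_poly_def)
qed
end
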